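(* Consider $n$ agents, where agent $i$ has a private type $t_i\in[0,\infty)$ and additive valuation $v_i(t_i,S)=t_i+w_i(S)$ for winning sets $S\ni i$ (and $v_i(t_i,S)=0$ for $S\not\ni i$), with publicly known $w_i$. Then an allocation rule $\mathcal{A}:[0,\infty)^n\to2^{[n]}$ can be truthfully implemented if and only if it is monotone: for every agent $i$, every $b_{-i}$ and every $b_i'\ge b_i$, $i\in\mathcal{A}(b_{-i},b_i)$ implies $i\in\mathcal{A}(b_{-i},b_i')$.
   Context: $\mathcal{A}$ can be truthfully implemented if there exist payment functions $p_i$, with $p_i(b)=0$ whenever $i\notin\mathcal{A}(b)$, such that for every $i$, every $b_{-i}$ and all $t_i,b_i\in[0,\infty)$: $v_i(t_i,\mathcal{A}(b_{-i},t_i))-p_i(b_{-i},t_i)\ge v_i(t_i,\mathcal{A}(b_{-i},b_i))-p_i(b_{-i},b_i)$. *)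

theory Defs
  imports Complex_Main
begin

definition nonneg_profile :: "('n \<Rightarrow> real) \<Rightarrow> bool" where
  "nonneg_profile b \<longleftrightarrow> (\<forall>j. b j \<ge> 0)"

definition add_val :: "('n \<Rightarrow> 'n set \<Rightarrow> real) \<Rightarrow> 'n \<Rightarrow> real \<Rightarrow> 'n set \<Rightarrow> real" where
  "add_val w i t S = (if i \<in> S then t + w i S else 0)"

definition truthfully_implementable ::
  "('n \<Rightarrow> real \<Rightarrow> 'n set \<Rightarrow> real) \<Rightarrow> (('n \<Rightarrow> real) \<Rightarrow> 'n set) \<Rightarrow> bool" where
  "truthfully_implementable v A \<longleftrightarrow>
     (\<exists>p :: 'n \<Rightarrow> ('n \<Rightarrow> real) \<Rightarrow> real.
        (\<forall>i b. nonneg_profile b \<longrightarrow> i \<notin> A b \<longrightarrow> p i b = 0) \<and>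
        (\<forall>i b t bi. nonneg_profile b \<longrightarrow> t \<ge> 0 \<longrightarrow> bi \<ge> 0 \<longrightarrow>
           v i t (A (b(i := t))) - p i (b(i := t))
             \<ge> v i t (A (b(i := bi))) - p i (b(i := bi))))"

definition monotone_alloc :: "(('n \<Rightarrow> real) \<Rightarrow> 'n set) \<Rightarrow> bool" where
  "monotone_alloc A \<longleftrightarrow>
     (\<forall>i b bi bi'. nonneg_profile b \<longrightarrow> 0 \<le> bi \<longrightarrow> bi \<le> bi' \<longrightarrow>
        i \<in> A (b(i := bi)) \<longrightarrow> i \<in> A (b(i := bi')))"

end

theory Submission
  imports Defs
begin

lemma mono_imp_truthful:
  fixes w :: "'n \<Rightarrow> 'n set \<Rightarrow> real" and A :: "('n \<Rightarrow> real) \<Rightarrow> 'n set"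
  assumes M: "monotone_alloc A"
  shows "truthfully_implementable (add_val w) A"
proof -
  define th where "th i b = Inf {x. x \<ge> 0 \<and> i \<in> A (b(i := x))}" for i and b :: "'n \<Rightarrow> real"
  define p where "p i b = (if i \<in> A b then th i b + w i (A b) else 0)" for i b
  have low: "th i b \<le> x" if "x \<ge> 0" "i \<in> A (b(i := x))" for i b x
    unfolding th_def by (rule cInf_lower) (use that in \<open>auto intro: bdd_belowI[where m=0]\<close>)
  have high: "i \<in> A (b(i := x))"
    if "nonneg_profile b" "x \<ge> 0" "th i b < x" "y \<ge> 0" "i \<in> A (b(i := y))" for i b x y
  proof -
    have ne: "{x. x \<ge> 0 \<and> i \<in> A (b(i := x))} \<noteq> {}" using that by auto
    from cInf_lessD[OF ne] that(3) obtain z where z: "z \<ge> 0" "i \<in> A (b(i := z))" "z < x"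
      unfolding th_def by auto
    with M that show ?thesis unfolding monotone_alloc_def by (meson less_imp_le)
  qed
  have thu: "th i (b(i := t)) = th i b" for i b t unfolding th_def by simp
  show ?thesis unfolding truthfully_implementable_def
  proof (intro exI conjI allI impI)
    fix i and b :: "'n \<Rightarrow> real" assume "nonneg_profile b" "i \<notin> A b"
    thus "p i b = 0" by (simp add: p_def)
  next
    fix i and b :: "'n \<Rightarrow> real" and t bi assume b: "nonneg_profile b" and t: "(0::real) \<le> t" and bi: "(0::real) \<le> bi"
    show "add_val w i t (A (b(i := bi))) - p i (b(i := bi))
          \<le> add_val w i t (A (b(i := t))) - p i (b(i := t))"
    proof (cases "i \<in> A (b(i := t))")
      case True
      have "th i b \<le> t" using low[OF t True] .
      thus ?thesis using True by (auto simp: p_def add_val_def thu)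
    next
      case False
      show ?thesis
      proof (cases "i \<in> A (b(i := bi))")
        case bw: True
        have "\<not> th i b < t" using high[OF b t _ bi bw] False by auto
        thus ?thesis using False bw by (auto simp: p_def add_val_def thu)
      next
        case False
        thus ?thesis using \<open>i \<notin> A (b(i := t))\<close> by (simp add: p_def add_val_def)
      qed
    qed
  qed
qed

lemma truthful_imp_mono:
  fixes w :: "'n \<Rightarrow> 'n set \<Rightarrow> real" and A :: "('n \<Rightarrow> real) \<Rightarrow> 'n set"
  assumes T: "truthfully_implementable (add_val w) A"
  shows "monotone_alloc A"
  unfolding monotone_alloc_def
proof (intro allI impI)
  from T obtain p where P0: "\<forall>i b. nonneg_profile b \<longrightarrow> i \<notin> A b \<longrightarrow> p i b = 0"
    and IC: "\<forall>i b t bi. nonneg_profile b \<longrightarrow> t \<ge> 0 \<longrightarrow> bi \<ge> 0 \<longrightarrow>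
           add_val w i t (A (b(i := t))) - p i (b(i := t))
             \<ge> add_val w i t (A (b(i := bi))) - p i (b(i := bi))"
    unfolding truthfully_implementable_def by blast
  fix i b bi bi' assume b: "nonneg_profile b" and h: "0 \<le> bi" "bi \<le> bi'" "i \<in> A (b(i := bi))"
  show "i \<in> A (b(i := bi'))"
  proof (rule ccontr)
    assume n: "i \<notin> A (b(i := bi'))"
    have nn: "nonneg_profile (b(i := bi'))" using b h by (simp add: nonneg_profile_def)
    have p0: "p i (b(i := bi')) = 0" using P0 nn n by blast
    have 1: "add_val w i bi' (A (b(i := bi'))) - p i (b(i := bi'))
             \<ge> add_val w i bi' (A (b(i := bi))) - p i (b(i := bi))"
      using IC b h by (meson order_trans)
    have 2: "add_val w i bi (A (b(i := bi))) - p i (b(i := bi))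
             \<ge> add_val w i bi (A (b(i := bi'))) - p i (b(i := bi'))"
      using IC b h by (meson order_trans)
    from 1 2 p0 n h have "bi' \<le> bi" by (simp add: add_val_def)
    with h have "bi = bi'" by simp
    with n h show False by simp
  qed
qed

theorem corollary1:
  fixes w :: "'n::finite \<Rightarrow> 'n set \<Rightarrow> real"
    and A :: "('n \<Rightarrow> real) \<Rightarrow> 'n set"
  shows "truthfully_implementable (add_val w) A \<longleftrightarrow> monotone_alloc A"
  using mono_imp_truthful truthful_imp_mono by blast

end
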